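(* Let $\gamma_2>\gamma_1>0$ and let $k_a\ge 1$ be an integer. Consider two agents, Alice (A) and Bob (B), whose states satisfy for $k=0,\dots,k_a-1$ $$p_X^{(k+1)}=p_X^{(k)}+v_X^{(k)},\qquad X\in\{A,B\},$$ and let $a_{AB}^{(k)}\neq 0$ ($k=0,\dots,k_a-1$) be known weights and $$u_{AB}^{(k)}=\gamma_1a_{AB}^{(k)}\big(p_B^{(k)}-p_A^{(k)}\big)+\gamma_2a_{AB}^{(k)}\big(v_B^{(k)}-v_A^{(k)}\big),\qquad k=0,\dots,k_a-1.$$ Suppose $|p_B^{(k_a)}-p_A^{(k_a)}|\le\delta$ for some $\delta\ge 0$. Set $r=\frac{\gamma_2}{\gamma_2-\gamma_1}$, $$\varphi_k=\frac{1}{\gamma_1-\gamma_2}\Big(\gamma_1p_A^{(k)}+\gamma_2v_A^{(k)}+\frac{u_{AB}^{(k)}}{a_{AB}^{(k)}}\Big),$$ and define the estimates (computable from $p_A^{(k)},v_A^{(k)},u_{AB}^{(k)},a_{AB}^{(k)}$ only) $$\hat p_B^{(0)}=r^{k_a}p_A^{(k_a)}+\sum_{k=0}^{k_a-1}r^{k}\varphi_k,\qquad \hat v_B^{(0)}=-\frac{\gamma_1}{\gamma_2}\hat p_B^{(0)}-\frac{\gamma_2-\gamma_1}{\gamma_2}\varphi_0 .$$ Then the errors $\varepsilon_p=\hat p_B^{(0)}-p_B^{(0)}$ and $\varepsilon_v=\hat v_B^{(0)}-v_B^{(0)}$ satisfy $$|\varepsilon_p|\le\Big(\frac{\gamma_2}{\gamma_2-\gamma_1}\Big)^{k_a}\delta,\qquad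 |\varepsilon_v|\le\frac{\gamma_1\gamma_2^{k_a-1}}{(\gamma_2-\gamma_1)^{k_a}}\delta.$$
   Context: This models a curious agent Alice estimating the initial position and velocity of a neighbor Bob in a network of double-integrator agents $p^{(k+1)}=p^{(k)}+v^{(k)}$, $v^{(k+1)}=v^{(k)}+u^{(k)}$ under the consensus law $u_i^{(k)}=\sum_j\gamma_1a_{ij}^{(k)}(p_j^{(k)}-p_i^{(k)})+\gamma_2a_{ij}^{(k)}(v_j^{(k)}-v_i^{(k)})$; $u_{AB}^{(k)}$ is Bob's contribution to Alice's input, and the coupling weights $a_{AB}^{(k)}$ are public. The condition $|p_B^{(k_a)}-p_A^{(k_a)}|\le\delta$ is called local $\delta$-agreement at time $k_a$. *)

theory Defs
  imports "HOL-Analysis.Analysis"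
begin

end

theory Submission
  imports Defs
begin

theorem theorem2:
  fixes g1 g2 \<delta> :: real and ka :: nat
    and pA vA pB vB a u :: "nat \<Rightarrow> real"
  assumes g: "0 < g1" "g1 < g2"
    and ka: "1 \<le> ka"
    and dynA: "\<And>k. k < ka \<Longrightarrow> pA (Suc k) = pA k + vA k"
    and dynB: "\<And>k. k < ka \<Longrightarrow> pB (Suc k) = pB k + vB k"
    and a_nz: "\<And>k. k < ka \<Longrightarrow> a k \<noteq> 0"
    and u_def: "\<And>k. k < ka \<Longrightarrow>
        u k = g1 * a k * (pB k - pA k) + g2 * a k * (vB k - vA k)"
    and \<delta>: "0 \<le> \<delta>"
    and agree: "\<bar>pB ka - pA ka\<bar> \<le> \<delta>"
  shows "let r = g2 / (g2 - g1);
             \<phi> = (\<lambda>k. (1 / (g1 - g2)) * (g1 * pA k + g2 * vA k + u k / a k));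
             pB0 = r ^ ka * pA ka + (\<Sum>k<ka. r ^ k * \<phi> k);
             vB0 = - (g1 / g2) * pB0 - ((g2 - g1) / g2) * \<phi> 0
         in \<bar>pB0 - pB 0\<bar> \<le> (g2 / (g2 - g1)) ^ ka * \<delta>
          \<and> \<bar>vB0 - vB 0\<bar> \<le> g1 * g2 ^ (ka - 1) / (g2 - g1) ^ ka * \<delta>"
proof -
  define r where "r = g2 / (g2 - g1)"
  define \<phi> where "\<phi> = (\<lambda>k. (1 / (g1 - g2)) * (g1 * pA k + g2 * vA k + u k / a k))"
  define pB0 where "pB0 = r ^ ka * pA ka + (\<Sum>k<ka. r ^ k * \<phi> k)"
  define vB0 where "vB0 = - (g1 / g2) * pB0 - ((g2 - g1) / g2) * \<phi> 0"
  have ne: "g1 - g2 \<noteq> 0" "g2 - g1 \<noteq> 0" "g2 \<noteq> 0" using g by auto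
  have phi1: "\<phi> k = (g1 * pB k + g2 * vB k) / (g1 - g2)" if "k < ka" for k
  proof -
    have "u k / a k = g1 * (pB k - pA k) + g2 * (vB k - vA k)"
      using u_def[OF that] a_nz[OF that] by (simp add: field_simps)
    thus ?thesis unfolding \<phi>_def by (simp add: field_simps)
  qed
  have phi2: "\<phi> k = pB k - r * pB (Suc k)" if "k < ka" for k
    unfolding phi1[OF that] r_def dynB[OF that] using ne by (simp add: field_simps)
  have tel: "n \<le> ka \<Longrightarrow> (\<Sum>k<n. r ^ k * \<phi> k) = pB 0 - r ^ n * pB n" for n
  proof (induction n)
    case 0 then show ?case by simp
  next
    case (Suc n)
    then have "n < ka" by simp
    then show ?case using Suc by (simp add: phi2 algebra_simps)
  qed
  have ep: "pB0 - pB 0 = r ^ ka * (pA ka - pB ka)"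
    unfolding pB0_def tel[OF order_refl] by (simp add: algebra_simps)
  have rpos: "0 \<le> r" unfolding r_def using g by simp
  have e1: "\<bar>pB0 - pB 0\<bar> \<le> r ^ ka * \<delta>"
    unfolding ep abs_mult using agree rpos
    by (simp add: abs_minus_commute mult_left_mono)
  have p0: "\<phi> 0 = (g1 * pB 0 + g2 * vB 0) / (g1 - g2)" using phi1 ka by simp
  have ev: "vB0 - vB 0 = - (g1 / g2) * (pB0 - pB 0)"
    unfolding vB0_def p0 using ne by (simp add: field_simps)
  have "\<bar>vB0 - vB 0\<bar> = (g1 / g2) * \<bar>pB0 - pB 0\<bar>"
    unfolding ev abs_mult using g by simp
  also have "\<dots> \<le> (g1 / g2) * (r ^ ka * \<delta>)"
    using e1 g by (intro mult_left_mono) auto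
  also have "\<dots> = g1 * g2 ^ (ka - 1) / (g2 - g1) ^ ka * \<delta>"
  proof -
    have "g2 ^ ka = g2 * g2 ^ (ka - 1)" using ka by (metis Suc_diff_1 less_le_trans zero_less_one power_Suc)
    thus ?thesis unfolding r_def power_divide using ne by (simp add: field_simps)
  qed
  finally have e2: "\<bar>vB0 - vB 0\<bar> \<le> g1 * g2 ^ (ka - 1) / (g2 - g1) ^ ka * \<delta>" .
  show ?thesis
    unfolding Let_def r_def[symmetric] \<phi>_def[symmetric] pB0_def[symmetric] vB0_def[symmetric]
    using e1 e2 r_def by simp
qed

end
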